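(* Let $L:C(\Sigma_A^+)\to C(\Sigma_A^+)$ be a positive linear operator (i.e. $Lg\ge0$ whenever $g\ge0$) such that $L(\mathcal{P}_\delta)\subset\mathcal{P}_{\delta'}$ for some $0<\delta'<\delta$. Then there exists $\kappa<1$ such that $\Theta(Lf,Lg)\le\kappa\,\Theta(f,g)$ for all $f,g\in\mathcal{P}_\delta$.
   Context: $\Sigma_A^+$ is a one-sided subshift of finite type (compact space). For $\delta>0$, $\mathcal{P}_\delta=\{g\in C(\Sigma_A^+):g>0,\ \sup_{x,y}g(x)/g(y)\le e^\delta\}$. For strictly positive continuous $f,g$, the Hilbert projective metric is $\Theta(f,g)=\log\dfrac{\sup_x f(x)/g(x)}{\inf_x f(x)/g(x)}$. *)

theory Defs
  imports "HOL-Analysis.Analysis"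
begin

text \<open>The space nat => nat carries the product topology (nat discrete),
  so this is the usual compact topology of the shift space.\<close>
definition SFT :: "nat \<Rightarrow> (nat \<Rightarrow> nat \<Rightarrow> bool) \<Rightarrow> (nat \<Rightarrow> nat) set" where
  "SFT k A = {x. \<forall>n. x n < k \<and> A (x n) (x (Suc n))}"

definition Pcone :: "(nat \<Rightarrow> nat) set \<Rightarrow> real \<Rightarrow> ((nat \<Rightarrow> nat) \<Rightarrow> real) set" where
  "Pcone S \<delta> = {g. continuous_on S g \<and> (\<forall>x\<in>S. 0 < g x) \<and>
                    (\<forall>x\<in>S. \<forall>y\<in>S. g x / g y \<le> exp \<delta>)}"

definition Theta :: "(nat \<Rightarrow> nat) set \<Rightarrow> ((nat \<Rightarrow> nat) \<Rightarrow> real) \<Rightarrow> ((nat \<Rightarrow> nat) \<Rightarrow> real) \<Rightarrow> real" where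
  "Theta S f g = ln ((SUP x\<in>S. f x / g x) / (INF x\<in>S. f x / g x))"

end

theory Submission
  imports Defs
begin

lemma arith1:
  fixes a a' p p' c E :: real
  assumes c: "0 < c" and E: "1 \<le> E" "E < 1 + c"
    and a: "0 < a" "0 < a'" and p: "0 \<le> p" "p \<le> a" "0 \<le> p'" "p' \<le> a'"
    and i1: "a + c*p \<le> E*(a' + c*p')"
    and i2: "(1+c)*a' - c*p' \<le> E*((1+c)*a - c*p)"
  shows "p/a - p'/a' \<le> 1 - (1+c-E)/(2*c*(1+E))"
proof (rule ccontr)
  define \<eta> where "\<eta> = (1+c-E)/(2*c*(1+E))"
  define u where "u = p/a"
  define u' where "u' = p'/a'"
  define t where "t = a'/a"
  have t: "t > 0" using a by (simp add: t_def)
  assume "\<not> ?thesis"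
  hence d: "u - u' > 1 - \<eta>" by (simp add: u_def u'_def \<eta>_def)
  have u1: "u \<le> 1" "0 \<le> u" using p a by (auto simp: u_def)
  have u2: "u' \<le> 1" "0 \<le> u'" using p a by (auto simp: u'_def)
  have hu: "u > 1 - \<eta>" and hu': "u' < \<eta>" using d u1 u2 by linarith+
  have j1: "1 + c*u \<le> E*t*(1 + c*u')"
  proof -
    have e1: "a*(1 + c*u) = a + c*p" using a by (simp add: u_def field_simps)
    have e2: "a*(E*t*(1 + c*u')) = E*(a' + c*p')" using a by (simp add: u'_def t_def field_simps)
    have "a*(1 + c*u) \<le> a*(E*t*(1 + c*u'))"
      using i1 unfolding e1 e2 .
    thus ?thesis using a by simp
  qed
  have j2: "t*(1 + c - c*u') \<le> E*(1 + c - c*u)"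
  proof -
    have e1: "a*(t*(1 + c - c*u')) = (1+c)*a' - c*p'" using a by (simp add: u'_def t_def field_simps)
    have e2: "a*(E*(1 + c - c*u)) = E*((1+c)*a - c*p)" using a by (simp add: u_def field_simps)
    have "a*(t*(1 + c - c*u')) \<le> a*(E*(1 + c - c*u))"
      using i2 unfolding e1 e2 .
    thus ?thesis using a by simp
  qed
  have k1: "1 + c - c*\<eta> < E*t*(1 + c*\<eta>)"
  proof -
    have "c*(1-\<eta>) < c*u" using hu c by simp
    hence "1 + c - c*\<eta> < 1 + c*u" by (simp add: algebra_simps)
    also have "E*t*(1 + c*u') < E*t*(1 + c*\<eta>)" using hu' c E t by simp
    ultimately show ?thesis using j1 by linarith
  qed
  have k2: "t*(1 + c - c*\<eta>) < E*(1 + c*\<eta>)"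
  proof -
    have "t*(1 + c - c*\<eta>) < t*(1 + c - c*u')" using hu' c t by simp
    also have "E*(1 + c - c*u) < E*(1 + c*\<eta>)"
    proof -
      have "c*(1-\<eta>) < c*u" using hu c by simp
      hence "1 + c - c*u < 1 + c*\<eta>" by (simp add: algebra_simps)
      thus ?thesis using E by simp
    qed
    ultimately show ?thesis using j2 by linarith
  qed
  have eta_pos: "\<eta> > 0" using c E by (simp add: \<eta>_def)
  have eta1: "\<eta> \<le> 1"
  proof -
    have "c \<le> c*(1+E)" using c E by simp
    hence "1+c-E \<le> 2*c*(1+E)" using c E by linarith
    thus ?thesis using c E by (simp add: \<eta>_def divide_le_eq)
  qed
  have pos1: "0 < 1 + c - c*\<eta>"
  proof -
    have "c*\<eta> \<le> c" using eta1 c by (simp add: mult_left_le)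
    thus ?thesis by linarith
  qed
  have "(1 + c - c*\<eta>)*(t*(1 + c - c*\<eta>)) < (E*t*(1 + c*\<eta>))*(E*(1 + c*\<eta>))"
  proof (rule mult_strict_mono[OF k1 k2])
    show "0 < E*t*(1 + c*\<eta>)" using E t c eta_pos by (simp add: add_pos_pos)
    show "0 \<le> t*(1 + c - c*\<eta>)" using t pos1 by simp
  qed
  hence "t*((1 + c - c*\<eta>)*(1 + c - c*\<eta>)) < t*((E*(1 + c*\<eta>))*(E*(1 + c*\<eta>)))"
    by (simp add: algebra_simps)
  hence sq: "(1 + c - c*\<eta>)*(1 + c - c*\<eta>) < (E*(1 + c*\<eta>))*(E*(1 + c*\<eta>))"
    using mult_less_cancel_left_pos[OF t] by blast
  have "1 + c - c*\<eta> < E*(1 + c*\<eta>)"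
  proof (rule ccontr)
    assume "\<not> ?thesis"
    hence le: "E*(1 + c*\<eta>) \<le> 1 + c - c*\<eta>" by simp
    have "0 \<le> E*(1 + c*\<eta>)" using E c eta_pos by simp
    hence "(E*(1 + c*\<eta>))*(E*(1 + c*\<eta>)) \<le> (1 + c - c*\<eta>)*(1 + c - c*\<eta>)"
      using le by (intro mult_mono) auto
    thus False using \<open>(1 + c - c*\<eta>)*(1 + c - c*\<eta>) < (E*(1 + c*\<eta>))*(E*(1 + c*\<eta>))\<close> by simp
  qed
  moreover have "c*\<eta>*(1+E) = (1+c-E)/2"
  proof -
    have nz: "c*(1+E) \<noteq> 0" using c E by simp
    have "c*\<eta>*(1+E) = (c*(1+E))*(1+c-E)/(2*(c*(1+E)))" by (simp add: \<eta>_def algebra_simps)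
    also have "\<dots> = (1+c-E)/2" using nz by simp
    finally show ?thesis .
  qed
  ultimately show False using E by (simp add: algebra_simps)
qed

lemma arith2:
  fixes G G' P P' a a' p p' m M :: real
  assumes "0 < G" "0 < G'" "0 < a" "0 < a'" "0 < m" "0 < M"
    "m*(a-p) \<le> G - P" "G \<le> M*a" "m*p' \<le> P'" "G' \<le> M*a'" "0 \<le> p'" "p \<le> a"
  shows "P/G - P'/G' \<le> 1 - (m/M)*(1 - p/a + p'/a')"
proof -
  have "(m/M)*(1 - p/a) \<le> 1 - P/G"
  proof -
    have "(m/M)*(1 - p/a) = m*(a-p)/(M*a)" using assms by (simp add: field_simps)
    also have "\<dots> \<le> m*(a-p)/G" using assms by (intro divide_left_mono) auto
    also have "\<dots> \<le> (G-P)/G" using assms by (simp add: divide_right_mono)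
    also have "\<dots> = 1 - P/G" using assms by (simp add: field_simps)
    finally show ?thesis .
  qed
  moreover have "(m/M)*(p'/a') \<le> P'/G'"
  proof -
    have "(m/M)*(p'/a') = m*p'/(M*a')" using assms by (simp add: field_simps)
    also have "\<dots> \<le> m*p'/G'" using assms by (intro divide_left_mono) auto
    also have "\<dots> \<le> P'/G'" using assms by (simp add: divide_right_mono)
    finally show ?thesis .
  qed
  ultimately show ?thesis by (simp add: algebra_simps)
qed

lemma arith3:
  fixes r R e K :: real
  assumes "1 \<le> r" "r \<le> R" "0 < e" "e \<le> 1" "K = 1 + (r-1)*(1-e)"
  shows "ln K \<le> (1 - e/R) * ln r"
proof -
  have K: "K \<ge> 1" using assms by simp
  have "1 - K/r \<le> ln (r/K)"
  proof -
    have "ln (K/r) \<le> K/r - 1" using K assms by (intro ln_le_minus_one divide_pos_pos) linarith+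
    moreover have "ln (K/r) = - ln (r/K)" using K assms(1) by (simp add: ln_div)
    ultimately show ?thesis by simp
  qed
  moreover have "ln (r/K) = ln r - ln K" using K assms(1) by (simp add: ln_div)
  moreover have "1 - K/r = (r-1)*e/r"
  proof -
    have r0: "r > 0" using assms by simp
    have "1 - K/r = (r - K)/r" using r0 by (simp add: field_simps)
    moreover have "r - K = (r-1)*e" using assms by (simp add: algebra_simps)
    ultimately show ?thesis by simp
  qed
  moreover have "(r-1)*e/R \<le> (r-1)*e/r" using assms by (intro divide_left_mono) auto
  moreover have "e/R * ln r \<le> (r-1)*e/R"
  proof -
    have "ln r \<le> r - 1" using assms by (intro ln_le_minus_one) auto
    hence "e * ln r \<le> e*(r-1)" using assms by simp
    thus ?thesis using assms by (simp add: divide_right_mono mult.commute)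
  qed
  ultimately show ?thesis by (simp add: algebra_simps)
qed


locale posop =
  fixes S :: "(nat \<Rightarrow> nat) set" and L :: "((nat \<Rightarrow> nat) \<Rightarrow> real) \<Rightarrow> ((nat \<Rightarrow> nat) \<Rightarrow> real)"
    and \<delta> \<delta>' :: real
  assumes ne: "S \<noteq> {}" and d1: "0 < \<delta>'" and d2: "\<delta>' < \<delta>"
    and cont: "\<And>f. continuous_on S f \<Longrightarrow> continuous_on S (L f)"
    and lin: "\<And>f g a b. continuous_on S f \<Longrightarrow> continuous_on S g \<Longrightarrow>
               \<forall>x\<in>S. L (\<lambda>y. a * f y + b * g y) x = a * L f x + b * L g x"
    and pos: "\<And>g. continuous_on S g \<Longrightarrow> (\<forall>x\<in>S. 0 \<le> g x) \<Longrightarrow> \<forall>x\<in>S. 0 \<le> L g x"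
    and maps: "\<And>g. g \<in> Pcone S \<delta> \<Longrightarrow> L g \<in> Pcone S \<delta>'"
begin

lemma L_lin: "continuous_on S f \<Longrightarrow> continuous_on S g \<Longrightarrow> x \<in> S \<Longrightarrow>
   L (\<lambda>y. a * f y + b * g y) x = a * L f x + b * L g x"
  using lin by blast

lemma L_nonneg: "continuous_on S h \<Longrightarrow> (\<And>y. y \<in> S \<Longrightarrow> 0 \<le> h y) \<Longrightarrow> x \<in> S \<Longrightarrow> 0 \<le> L h x"
  using pos by blast

lemma L_cong:
  assumes f: "continuous_on S f" and g: "continuous_on S g" and eq: "\<And>y. y \<in> S \<Longrightarrow> f y = g y"
    and x: "x \<in> S"
  shows "L f x = L g x"
proof -
  have c1: "continuous_on S (\<lambda>y. 1 * f y + (-1) * g y)" by (intro continuous_intros f g)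
  have c2: "continuous_on S (\<lambda>y. 1 * g y + (-1) * f y)" by (intro continuous_intros f g)
  have "0 \<le> L (\<lambda>y. 1 * f y + (-1) * g y) x" using eq by (intro L_nonneg[OF c1 _ x]) simp
  moreover have "0 \<le> L (\<lambda>y. 1 * g y + (-1) * f y) x" using eq by (intro L_nonneg[OF c2 _ x]) simp
  ultimately show ?thesis using L_lin[OF f g x, of 1 "-1"] L_lin[OF g f x, of 1 "-1"] by simp
qed

lemma L_comb:
  assumes c: "continuous_on S f1" "continuous_on S f2" "continuous_on S f3" "continuous_on S f4"
    and h: "continuous_on S h" and eq: "\<And>y. y \<in> S \<Longrightarrow> h y = a1 * f1 y + a2 * f2 y + a3 * f3 y + a4 * f4 y"
    and x: "x \<in> S"
  shows "L h x = a1 * L f1 x + a2 * L f2 x + a3 * L f3 x + a4 * L f4 x"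
proof -
  have c12: "continuous_on S (\<lambda>y. a1 * f1 y + a2 * f2 y)" by (intro continuous_intros c)
  have c34: "continuous_on S (\<lambda>y. a3 * f3 y + a4 * f4 y)" by (intro continuous_intros c)
  have cc: "continuous_on S (\<lambda>y. 1 * (a1 * f1 y + a2 * f2 y) + 1 * (a3 * f3 y + a4 * f4 y))"
    by (intro continuous_intros c)
  have "L h x = L (\<lambda>y. 1 * (a1 * f1 y + a2 * f2 y) + 1 * (a3 * f3 y + a4 * f4 y)) x"
    using eq by (intro L_cong[OF h cc _ x]) simp
  also have "\<dots> = L (\<lambda>y. a1 * f1 y + a2 * f2 y) x + L (\<lambda>y. a3 * f3 y + a4 * f4 y) x"
    using L_lin[OF c12 c34 x, of 1 1] by simp
  also have "\<dots> = a1 * L f1 x + a2 * L f2 x + a3 * L f3 x + a4 * L f4 x"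
    using L_lin[OF c(1,2) x] L_lin[OF c(3,4) x] by simp
  finally show ?thesis .
qed

lemma Pcone_D:
  assumes "g \<in> Pcone S d" "y \<in> S" "z \<in> S"
  shows "0 < g y" "g y \<le> exp d * g z"
proof -
  show gy: "0 < g y" using assms unfolding Pcone_def by auto
  have gz: "0 < g z" using assms unfolding Pcone_def by auto
  have "g y / g z \<le> exp d" using assms unfolding Pcone_def by auto
  thus "g y \<le> exp d * g z" using gz by (simp add: divide_le_eq)
qed

lemma Pcone_cont: "g \<in> Pcone S d \<Longrightarrow> continuous_on S g"
  unfolding Pcone_def by auto

lemma Pcone_I:
  assumes "continuous_on S g" "\<And>y. y \<in> S \<Longrightarrow> 0 < g y" "\<And>y z. y \<in> S \<Longrightarrow> z \<in> S \<Longrightarrow> g y \<le> exp d * g z"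
  shows "g \<in> Pcone S d"
  unfolding Pcone_def using assms by (auto simp: divide_le_eq)

definition eta where "eta = (exp \<delta> - exp \<delta>')/(2*(exp \<delta> - 1)*(1 + exp \<delta>'))"

lemma eta_pos: "0 < eta" and eta_le1: "eta \<le> 1"
proof -
  have a: "exp \<delta>' < exp \<delta>" "1 < exp \<delta>'" using d1 d2 by auto
  have b: "0 < 1 + exp \<delta>'" by (smt (verit) exp_gt_zero)
  show "0 < eta" using a b unfolding eta_def by (intro divide_pos_pos mult_pos_pos) auto
  have "exp \<delta> - exp \<delta>' \<le> 2*(exp \<delta> - 1)*(1 + exp \<delta>')"
  proof -
    have "exp \<delta> - 1 \<le> (exp \<delta> - 1)*(1 + exp \<delta>')" using a by simp
    thus ?thesis using a by linarith
  qed
  moreover have "0 < 2*(exp \<delta> - 1)*(1 + exp \<delta>')" using a b by simp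
  ultimately show "eta \<le> 1" unfolding eta_def by (simp add: divide_le_eq)
qed

lemma core:
  assumes g: "g \<in> Pcone S \<delta>" and psic: "continuous_on S \<psi>"
    and psi: "\<And>y. y \<in> S \<Longrightarrow> 0 \<le> \<psi> y \<and> \<psi> y \<le> 1" and x: "x \<in> S" "x' \<in> S"
  shows "L (\<lambda>y. \<psi> y * g y) x / L g x - L (\<lambda>y. \<psi> y * g y) x' / L g x'
         \<le> 1 - exp (-2*\<delta>) * eta"
proof -
  define c where "c = exp \<delta> - 1"
  define E where "E = exp \<delta>'"
  define one :: "(nat \<Rightarrow> nat) \<Rightarrow> real" where "one = (\<lambda>_. 1)"
  define pg where "pg = (\<lambda>y. \<psi> y * g y)"
  have c0: "0 < c" using d1 d2 by (simp add: c_def)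
  have E1: "1 \<le> E" "E < 1 + c" using d1 d2 by (auto simp: E_def c_def)
  have gc: "continuous_on S g" using Pcone_cont[OF g] .
  have onec: "continuous_on S one" by (simp add: one_def)
  have pgc: "continuous_on S pg" unfolding pg_def by (intro continuous_intros psic gc)
  have one_P: "one \<in> Pcone S \<delta>" using onec d1 d2 by (intro Pcone_I) (auto simp: one_def)
  have Lone: "0 < L one x" "0 < L one x'" using Pcone_D(1)[OF maps[OF one_P]] x by auto
  have Lg: "0 < L g x" "0 < L g x'" using Pcone_D(1)[OF maps[OF g]] x by auto
  define q1 where "q1 = (\<lambda>y. 1 + c * \<psi> y)"
  define q2 where "q2 = (\<lambda>y. 1 + c * (1 - \<psi> y))"
  have q1c: "continuous_on S q1" unfolding q1_def by (intro continuous_intros psic)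
  have q2c: "continuous_on S q2" unfolding q2_def by (intro continuous_intros psic)
  have ce: "1 + c = exp \<delta>" by (simp add: c_def)
  have q1b: "1 \<le> q1 y \<and> q1 y \<le> exp \<delta>" if "y \<in> S" for y
  proof -
    have "c * \<psi> y \<le> c" "0 \<le> c * \<psi> y" using psi[OF that] c0 by (auto simp: mult_left_le)
    thus ?thesis using ce by (simp add: q1_def)
  qed
  have q2b: "1 \<le> q2 y \<and> q2 y \<le> exp \<delta>" if "y \<in> S" for y
  proof -
    have "c * (1 - \<psi> y) \<le> c" "0 \<le> c * (1 - \<psi> y)" using psi[OF that] c0 by (auto simp: mult_left_le)
    thus ?thesis using ce by (simp add: q2_def)
  qed
  have q1P: "q1 \<in> Pcone S \<delta>"
  proof (rule Pcone_I[OF q1c])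
    fix y z assume "y \<in> S" "z \<in> S"
    thus "q1 y \<le> exp \<delta> * q1 z" using q1b[of y] q1b[of z]
      by (smt (verit) exp_gt_zero mult_le_cancel_left1)
  qed (use q1b in force)
  have q2P: "q2 \<in> Pcone S \<delta>"
  proof (rule Pcone_I[OF q2c])
    fix y z assume "y \<in> S" "z \<in> S"
    thus "q2 y \<le> exp \<delta> * q2 z" using q2b[of y] q2b[of z]
      by (smt (verit) exp_gt_zero mult_le_cancel_left1)
  qed (use q2b in force)
  have Lq1: "L q1 x = L one x + c * L \<psi> x" "L q1 x' = L one x' + c * L \<psi> x'"
    using L_comb[OF onec psic onec onec q1c _ x(1), of 1 c 0 0]
      L_comb[OF onec psic onec onec q1c _ x(2), of 1 c 0 0] by (auto simp: q1_def one_def)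
  have Lq2: "L q2 x = (1+c) * L one x - c * L \<psi> x" "L q2 x' = (1+c) * L one x' - c * L \<psi> x'"
    using L_comb[OF onec psic onec onec q2c _ x(1), of "1+c" "-c" 0 0]
      L_comb[OF onec psic onec onec q2c _ x(2), of "1+c" "-c" 0 0] by (auto simp: q2_def one_def algebra_simps)
  have i1: "L one x + c * L \<psi> x \<le> E * (L one x' + c * L \<psi> x')"
    using Pcone_D(2)[OF maps[OF q1P] x] by (simp add: Lq1 E_def)
  have i2: "(1+c) * L one x' - c * L \<psi> x' \<le> E * ((1+c) * L one x - c * L \<psi> x)"
    using Pcone_D(2)[OF maps[OF q2P] x(2) x(1)] by (simp add: Lq2 E_def)
  have Lpsi: "0 \<le> L \<psi> z \<and> L \<psi> z \<le> L one z" if z: "z \<in> S" for z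
  proof
    show "0 \<le> L \<psi> z" using psi by (intro L_nonneg[OF psic _ z]) auto
    have cc: "continuous_on S (\<lambda>y. 1 - \<psi> y)" by (intro continuous_intros psic)
    have "0 \<le> L (\<lambda>y. 1 - \<psi> y) z" using psi by (intro L_nonneg[OF cc _ z]) auto
    moreover have "L (\<lambda>y. 1 - \<psi> y) z = L one z - L \<psi> z"
      using L_comb[OF onec psic onec onec cc _ z, of 1 "-1" 0 0] by (simp add: one_def)
    ultimately show "L \<psi> z \<le> L one z" by simp
  qed
  have A1: "L \<psi> x / L one x - L \<psi> x' / L one x' \<le> 1 - eta"
    using arith1[OF c0 E1 Lone _ _ _ _ i1 i2] Lpsi[OF x(1)] Lpsi[OF x(2)]
    unfolding eta_def c_def E_def by simp
  define m where "m = exp (-\<delta>) * g x"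
  define M where "M = exp \<delta> * g x"
  have gx: "0 < g x" using Pcone_D(1)[OF g x(1) x(1)] .
  have m0: "0 < m" and M0: "0 < M" using gx by (auto simp: m_def M_def)
  have gb: "m \<le> g y \<and> g y \<le> M" if "y \<in> S" for y
  proof
    show "g y \<le> M" using Pcone_D(2)[OF g that x(1)] by (simp add: M_def)
    have "g x \<le> exp \<delta> * g y" using Pcone_D(2)[OF g x(1) that] .
    hence "exp (-\<delta>) * g x \<le> exp (-\<delta>) * (exp \<delta> * g y)" by simp
    thus "m \<le> g y" by (simp add: m_def exp_minus field_simps)
  qed
  have B1: "m * (L one x - L \<psi> x) \<le> L g x - L pg x"
  proof -
    define h where "h = (\<lambda>y. 1 * g y + (-1) * pg y + (-m) * one y + m * \<psi> y)"
    have hc: "continuous_on S h" unfolding h_def by (intro continuous_intros gc pgc onec psic)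
    have "0 \<le> L h x"
    proof (rule L_nonneg[OF hc _ x(1)])
      fix y assume y: "y \<in> S"
      have "h y = (1 - \<psi> y) * (g y - m)" by (simp add: h_def pg_def one_def algebra_simps)
      thus "0 \<le> h y" using psi[OF y] gb[OF y] by simp
    qed
    moreover have "L h x = 1 * L g x + (-1) * L pg x + (-m) * L one x + m * L \<psi> x"
      by (rule L_comb[OF gc pgc onec psic hc _ x(1)]) (simp add: h_def)
    ultimately show ?thesis by (simp add: algebra_simps)
  qed
  have B2: "L g z \<le> M * L one z" if z: "z \<in> S" for z
  proof -
    define h where "h = (\<lambda>y. M * one y + (-1) * g y + 0 * g y + 0 * g y)"
    have hc: "continuous_on S h" unfolding h_def by (intro continuous_intros gc onec)
    have "0 \<le> L h z" using gb by (intro L_nonneg[OF hc _ z]) (simp add: h_def one_def)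
    moreover have "L h z = M * L one z + (-1) * L g z + 0 * L g z + 0 * L g z"
      by (rule L_comb[OF onec gc gc gc hc _ z]) (simp add: h_def)
    ultimately show ?thesis by simp
  qed
  have B3: "m * L \<psi> x' \<le> L pg x'"
  proof -
    define h where "h = (\<lambda>y. 1 * pg y + (-m) * \<psi> y + 0 * g y + 0 * g y)"
    have hc: "continuous_on S h" unfolding h_def by (intro continuous_intros gc pgc psic)
    have "0 \<le> L h x'"
    proof (rule L_nonneg[OF hc _ x(2)])
      fix y assume y: "y \<in> S"
      have "h y = \<psi> y * (g y - m)" by (simp add: h_def pg_def algebra_simps)
      thus "0 \<le> h y" using psi[OF y] gb[OF y] by simp
    qed
    moreover have "L h x' = 1 * L pg x' + (-m) * L \<psi> x' + 0 * L g x' + 0 * L g x'"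
      by (rule L_comb[OF pgc psic gc gc hc _ x(2)]) (simp add: h_def)
    ultimately show ?thesis by simp
  qed
  have mM: "m / M = exp (-2*\<delta>)" using gx by (simp add: m_def M_def exp_minus field_simps mult_exp_exp)
  have "L pg x / L g x - L pg x' / L g x'
        \<le> 1 - (m/M) * (1 - L \<psi> x / L one x + L \<psi> x' / L one x')"
    using arith2[OF Lg Lone m0 M0 B1 B2[OF x(1)] B3 B2[OF x(2)]] Lpsi[OF x(1)] Lpsi[OF x(2)] by simp
  also have "\<dots> \<le> 1 - (m/M) * eta"
  proof -
    have "eta \<le> 1 - L \<psi> x / L one x + L \<psi> x' / L one x'" using A1 by simp
    thus ?thesis using m0 M0 by (intro diff_left_mono mult_left_mono) auto
  qed
  finally show ?thesis unfolding pg_def mM .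
qed


definition kappa where "kappa = 1 - (exp (-2*\<delta>) * eta) / exp (2*\<delta>)"

lemma kappa_lt1: "kappa < 1"
  using eta_pos unfolding kappa_def by simp

lemma main:
  assumes f: "f \<in> Pcone S \<delta>" and g: "g \<in> Pcone S \<delta>"
  shows "Theta S (L f) (L g) \<le> kappa * Theta S f g"
proof -
  define \<phi> where "\<phi> = (\<lambda>y. f y / g y)"
  define e where "e = exp (-2*\<delta>) * eta"
  define R where "R = exp (2*\<delta>)"
  obtain x0 where x0: "x0 \<in> S" using ne by auto
  have R0: "0 < R" by (simp add: R_def)
  have e0: "0 < e" "e \<le> 1"
  proof -
    show "0 < e" using eta_pos by (simp add: e_def)
    have "exp (-2*\<delta>) \<le> 1" using d1 d2 by simp
    hence "exp (-2*\<delta>) * eta \<le> 1 * 1" using eta_pos eta_le1 by (intro mult_mono) auto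
    thus "e \<le> 1" by (simp add: e_def)
  qed
  have fpos: "0 < f y" and gpos: "0 < g y" if "y \<in> S" for y
    using Pcone_D(1)[OF f that that] Pcone_D(1)[OF g that that] by auto
  have phipos: "0 < \<phi> y" if "y \<in> S" for y using fpos[OF that] gpos[OF that] by (simp add: \<phi>_def)
  have phib: "\<phi> y \<le> R * \<phi> z" if y: "y \<in> S" and z: "z \<in> S" for y z
  proof -
    have "f y * g z \<le> (exp \<delta> * f z) * (exp \<delta> * g y)"
      using Pcone_D(2)[OF f y z] Pcone_D(2)[OF g z y] fpos[OF y] gpos[OF z] by (intro mult_mono) auto
    moreover have "R = exp \<delta> * exp \<delta>" unfolding R_def by (simp add: exp_add[symmetric])
    ultimately have "f y * g z \<le> R * f z * g y" by (simp add: algebra_simps)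
    thus ?thesis using gpos[OF y] gpos[OF z] by (simp add: \<phi>_def field_simps)
  qed
  have bddA: "bdd_above (\<phi> ` S)" using phib x0 by (intro bdd_aboveI2[where M="R * \<phi> x0"]) auto
  have bddB: "bdd_below (\<phi> ` S)" using phipos by (intro bdd_belowI2[where m=0]) (auto intro: less_imp_le)
  define \<alpha> where "\<alpha> = (INF y\<in>S. \<phi> y)"
  define \<beta> where "\<beta> = (SUP y\<in>S. \<phi> y)"
  have al: "\<alpha> \<le> \<phi> y" if "y \<in> S" for y unfolding \<alpha>_def by (rule cINF_lower[OF bddB that])
  have be: "\<phi> y \<le> \<beta>" if "y \<in> S" for y unfolding \<beta>_def by (rule cSUP_upper[OF that bddA])
  have al0: "0 < \<alpha>"
  proof -
    have "\<phi> x0 / R \<le> \<alpha>" unfolding \<alpha>_def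
      using ne phib[OF x0] R0 by (intro cINF_greatest) (auto simp: divide_le_eq mult.commute)
    thus ?thesis using phipos[OF x0] R0 by (smt (verit) divide_pos_pos)
  qed
  have beR: "\<beta> \<le> R * \<alpha>"
  proof -
    have "\<phi> y \<le> R * \<alpha>" if y: "y \<in> S" for y
    proof -
      have "\<phi> y / R \<le> \<alpha>" unfolding \<alpha>_def
        using ne phib[OF y] R0 by (intro cINF_greatest) (auto simp: divide_le_eq mult.commute)
      thus ?thesis using R0 by (simp add: divide_le_eq mult.commute)
    qed
    thus ?thesis unfolding \<beta>_def using ne by (intro cSUP_least) auto
  qed
  have alb: "\<alpha> \<le> \<beta>" using al[OF x0] be[OF x0] by simp
  have Th1: "Theta S f g = ln (\<beta> / \<alpha>)" by (simp add: Theta_def \<alpha>_def \<beta>_def \<phi>_def)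
  have fc: "continuous_on S f" and gc: "continuous_on S g" using Pcone_cont f g by auto
  have Lg: "0 < L g y" and Lf: "0 < L f y" if "y \<in> S" for y
    using Pcone_D(1)[OF maps[OF g] that that] Pcone_D(1)[OF maps[OF f] that that] by auto
  define \<rho> where "\<rho> = (\<lambda>y. L f y / L g y)"
  have rho_ge: "\<alpha> \<le> \<rho> y" if y: "y \<in> S" for y
  proof -
    have cc: "continuous_on S (\<lambda>z. 1 * f z + (-\<alpha>) * g z)" by (intro continuous_intros fc gc)
    have "0 \<le> L (\<lambda>z. 1 * f z + (-\<alpha>) * g z) y"
    proof (rule L_nonneg[OF cc _ y])
      fix z assume z: "z \<in> S"
      have "\<alpha> * g z \<le> f z" using al[OF z] gpos[OF z] by (simp add: \<phi>_def le_divide_eq)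
      thus "0 \<le> 1 * f z + (-\<alpha>) * g z" by simp
    qed
    hence "\<alpha> * L g y \<le> L f y" using L_lin[OF fc gc y, of 1 "-\<alpha>"] by simp
    thus ?thesis using Lg[OF y] by (simp add: \<rho>_def le_divide_eq)
  qed
  have claim: "\<rho> y \<le> \<rho> z + (\<beta> - \<alpha>) * (1 - e)" if y: "y \<in> S" and z: "z \<in> S" for y z
  proof (cases "\<beta> = \<alpha>")
    case True
    have "L f w = \<alpha> * L g w" if w: "w \<in> S" for w
    proof -
      have cc: "continuous_on S (\<lambda>v. \<alpha> * g v + 0 * g v)" by (intro continuous_intros gc)
      have "L f w = L (\<lambda>v. \<alpha> * g v + 0 * g v) w"
      proof (rule L_cong[OF fc cc _ w])
        fix v assume v: "v \<in> S"
        have "\<phi> v = \<alpha>" using al[OF v] be[OF v] True by simp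
        thus "f v = \<alpha> * g v + 0 * g v" using gpos[OF v] by (simp add: \<phi>_def divide_eq_eq)
      qed
      thus ?thesis using L_lin[OF gc gc w, of \<alpha> 0] by simp
    qed
    hence "\<rho> y = \<alpha>" "\<rho> z = \<alpha>" using Lg[OF y] Lg[OF z] y z by (auto simp: \<rho>_def)
    thus ?thesis using True by simp
  next
    case False
    hence ab: "\<alpha> < \<beta>" using alb by simp
    define \<psi> where "\<psi> = (\<lambda>w. (\<phi> w - \<alpha>) / (\<beta> - \<alpha>))"
    have phic: "continuous_on S \<phi>" unfolding \<phi>_def
      using gpos by (intro continuous_on_divide fc gc) (auto simp: less_imp_neq[symmetric])
    have psic: "continuous_on S \<psi>" unfolding \<psi>_def using ab by (intro continuous_intros phic) auto
    have psib: "0 \<le> \<psi> w \<and> \<psi> w \<le> 1" if "w \<in> S" for w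
      using al[OF that] be[OF that] ab by (auto simp: \<psi>_def divide_le_eq)
    have pgc: "continuous_on S (\<lambda>w. \<psi> w * g w)" by (intro continuous_intros psic gc)
    have Lfw: "L f w = \<alpha> * L g w + (\<beta> - \<alpha>) * L (\<lambda>w. \<psi> w * g w) w" if w: "w \<in> S" for w
    proof -
      have cc: "continuous_on S (\<lambda>v. \<alpha> * g v + (\<beta> - \<alpha>) * (\<psi> v * g v))" by (intro continuous_intros gc psic)
      have "L f w = L (\<lambda>v. \<alpha> * g v + (\<beta> - \<alpha>) * (\<psi> v * g v)) w"
      proof (rule L_cong[OF fc cc _ w])
        fix v assume v: "v \<in> S"
        have "(\<beta> - \<alpha>) * (\<psi> v * g v) = (\<phi> v - \<alpha>) * g v" using ab by (simp add: \<psi>_def)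
        also have "\<dots> = f v - \<alpha> * g v" using gpos[OF v] by (simp add: \<phi>_def algebra_simps)
        finally show "f v = \<alpha> * g v + (\<beta> - \<alpha>) * (\<psi> v * g v)" by simp
      qed
      thus ?thesis using L_lin[OF gc pgc w, of \<alpha> "\<beta> - \<alpha>"] by simp
    qed
    have rw: "\<rho> w = \<alpha> + (\<beta> - \<alpha>) * (L (\<lambda>w. \<psi> w * g w) w / L g w)" if w: "w \<in> S" for w
      using Lfw[OF w] Lg[OF w] by (simp add: \<rho>_def field_simps)
    have "L (\<lambda>w. \<psi> w * g w) y / L g y - L (\<lambda>w. \<psi> w * g w) z / L g z \<le> 1 - e"
      using core[OF g psic psib y z] by (simp add: e_def)
    hence "(\<beta> - \<alpha>) * (L (\<lambda>w. \<psi> w * g w) y / L g y - L (\<lambda>w. \<psi> w * g w) z / L g z) \<le> (\<beta> - \<alpha>) * (1 - e)"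
      using ab by (intro mult_left_mono) auto
    thus ?thesis using rw[OF y] rw[OF z] by (simp add: algebra_simps)
  qed
  define r where "r = \<beta> / \<alpha>"
  define K where "K = 1 + (r - 1) * (1 - e)"
  have r1: "1 \<le> r" using alb al0 by (simp add: r_def)
  have rR: "r \<le> R" using beR al0 by (simp add: r_def divide_le_eq)
  have K1: "1 \<le> K" using r1 e0 by (simp add: K_def)
  have rhoK: "\<rho> y \<le> K * \<rho> z" if y: "y \<in> S" and z: "z \<in> S" for y z
  proof -
    have "\<beta> - \<alpha> = \<alpha> * (r - 1)" using al0 by (simp add: r_def field_simps)
    hence "(\<beta> - \<alpha>) * (1 - e) = \<alpha> * ((r - 1) * (1 - e))" by simp
    also have "\<dots> \<le> \<rho> z * ((r - 1) * (1 - e))"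
      using rho_ge[OF z] r1 e0 by (intro mult_right_mono) auto
    finally show ?thesis using claim[OF y z] by (simp add: K_def algebra_simps)
  qed
  have rhopos: "0 < \<rho> y" if "y \<in> S" for y using Lf[OF that] Lg[OF that] by (simp add: \<rho>_def)
  have bddA2: "bdd_above (\<rho> ` S)" using rhoK x0 by (intro bdd_aboveI2[where M="K * \<rho> x0"]) auto
  have bddB2: "bdd_below (\<rho> ` S)" using rho_ge by (intro bdd_belowI2[where m=\<alpha>]) auto
  define Sp where "Sp = (SUP y\<in>S. \<rho> y)"
  define Ip where "Ip = (INF y\<in>S. \<rho> y)"
  have Sp_le: "Sp \<le> K * \<rho> z" if z: "z \<in> S" for z
    unfolding Sp_def using ne rhoK[OF _ z] by (intro cSUP_least) auto
  have Ip_ge: "Sp / K \<le> Ip" unfolding Ip_def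
    using ne Sp_le K1 by (intro cINF_greatest) (auto simp: divide_le_eq mult.commute)
  have Ip0: "0 < Ip"
  proof -
    have "\<alpha> \<le> Ip" unfolding Ip_def using ne rho_ge by (intro cINF_greatest) auto
    thus ?thesis using al0 by simp
  qed
  have Sp0: "0 < Sp"
  proof -
    have "\<rho> x0 \<le> Sp" unfolding Sp_def by (rule cSUP_upper[OF x0 bddA2])
    thus ?thesis using rhopos[OF x0] by simp
  qed
  have ratio: "Sp / Ip \<le> K" using Ip_ge Ip0 K1 by (simp add: divide_le_eq mult.commute)
  have Th2: "Theta S (L f) (L g) = ln (Sp / Ip)" by (simp add: Theta_def Sp_def Ip_def \<rho>_def)
  have "ln (Sp / Ip) \<le> ln K" using ratio Sp0 Ip0 K1 by (subst ln_le_cancel_iff) auto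
  also have "ln K \<le> (1 - e / R) * ln r" using arith3[OF r1 rR e0 K_def] .
  finally show ?thesis unfolding Th1 Th2 kappa_def e_def R_def r_def .
qed

end

theorem lemma5p8:
  fixes k :: nat and A :: "nat \<Rightarrow> nat \<Rightarrow> bool" and \<delta> \<delta>' :: real
    and L :: "((nat \<Rightarrow> nat) \<Rightarrow> real) \<Rightarrow> ((nat \<Rightarrow> nat) \<Rightarrow> real)"
  assumes nonempty: "SFT k A \<noteq> {}"
    and delta: "0 < \<delta>'" "\<delta>' < \<delta>"
    and cont: "\<And>f. continuous_on (SFT k A) f \<Longrightarrow> continuous_on (SFT k A) (L f)"
    and lin: "\<And>f g a b. continuous_on (SFT k A) f \<Longrightarrow> continuous_on (SFT k A) g \<Longrightarrow>
               \<forall>x\<in>SFT k A. L (\<lambda>y. a * f y + b * g y) x = a * L f x + b * L g x"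
    and pos: "\<And>g. continuous_on (SFT k A) g \<Longrightarrow> (\<forall>x\<in>SFT k A. 0 \<le> g x) \<Longrightarrow>
               \<forall>x\<in>SFT k A. 0 \<le> L g x"
    and maps: "\<And>g. g \<in> Pcone (SFT k A) \<delta> \<Longrightarrow> L g \<in> Pcone (SFT k A) \<delta>'"
  shows "\<exists>\<kappa><1. \<forall>f\<in>Pcone (SFT k A) \<delta>. \<forall>g\<in>Pcone (SFT k A) \<delta>.
           Theta (SFT k A) (L f) (L g) \<le> \<kappa> * Theta (SFT k A) f g"
proof -
  interpret posop "SFT k A" L \<delta> \<delta>'
    using nonempty delta cont lin pos maps by unfold_locales auto
  show ?thesis using kappa_lt1 main by blast
qed

end
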